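(* There exists a constant $c_0>0$ such that for all $n,r,t\in\mathbb{N}$ and $\varepsilon\in(0,1)$ with $r<\frac{\varepsilon^2 n}{c_0t}$, there is a nonadaptive $t$-online-corruption-resilient $\varepsilon$-tester for sortedness of $n$-element real sequences with at most $r$ distinct values that makes $O(\sqrt r/\varepsilon)$ queries, each chosen uniformly and independently from $[n]$.
   Context: An algorithm accesses an input function $f:D\to R$ ($D$ finite) only through an oracle $\mathcal{O}$, querying points one at a time and receiving $\mathcal{O}(x)$; initially $\mathcal{O}(x)=f(x)$ for all $x$. A $t$-online-corruption oracle, after answering each query, may replace $\mathcal{O}(x)$ at up to $t$ points $x$ by arbitrary values in the range of $f$; modified values are used for all future queries. Its choices (adversarial strategy) may depend on $f$, the queries and answers so far, and the algorithm's code, but not on the algorithm's future random coins. $f$ is $\varepsilon$-far from a property $\mathcal{P}$ (a set of functions) if it differs from every $g\in\mathcal{P}$ on at least an $\varepsilon$ fraction of $D$. A $t$-online-corruption-resilient $\varepsilon$-tester for $\mathcal{P}$ is a randomized algorithm that, with access to $f$ via a $t$-online-corruption oracle and for every adversarial strategy, accepts with probability at least $2/3$ if $f\in\mathcal{P}$ and rejects with probability at least $2/3$ if $f$ is $\varepsilon$-far from $\mathcal{P}$. Nonadaptive means queries do not depend on previous answers. A sequence $f:[n]\to\mathbb{R}$ is sorted if $f(x)\le f(y)$ for all $x<y$; the tester is promised that $f$ takes at most $r$ distinct values. *)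

theory Defs
  imports "HOL-Probability.Probability"
begin

text \<open>Domain [n] is rendered as {..<n}; sequences are functions nat \<Rightarrow> real
  (only values on {..<n} matter).\<close>

definition sorted_on :: "nat \<Rightarrow> (nat \<Rightarrow> real) \<Rightarrow> bool" where
  "sorted_on n f \<longleftrightarrow> (\<forall>x y. x < y \<and> y < n \<longrightarrow> f x \<le> f y)"

definition far_from_sorted :: "nat \<Rightarrow> real \<Rightarrow> (nat \<Rightarrow> real) \<Rightarrow> bool" where
  "far_from_sorted n \<epsilon> f \<longleftrightarrow>
     (\<forall>g. sorted_on n g \<longrightarrow> real (card {x \<in> {..<n}. f x \<noteq> g x}) \<ge> \<epsilon> * real n)"

text \<open>An adversarial strategy: given the queries made so far, the answers given so far,
  and the current oracle, it produces the oracle used for the future.\<close>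
type_synonym adversary = "nat list \<Rightarrow> real list \<Rightarrow> (nat \<Rightarrow> real) \<Rightarrow> (nat \<Rightarrow> real)"

definition t_online_adversary :: "nat \<Rightarrow> nat \<Rightarrow> adversary \<Rightarrow> bool" where
  "t_online_adversary n t adv \<longleftrightarrow>
     (\<forall>qs as Orc. card {x \<in> {..<n}. adv qs as Orc x \<noteq> Orc x} \<le> t)"

fun oracle_answers :: "adversary \<Rightarrow> nat list \<Rightarrow> real list \<Rightarrow> (nat \<Rightarrow> real) \<Rightarrow> nat list \<Rightarrow> real list" where
  "oracle_answers adv hq ha Orc [] = []"
| "oracle_answers adv hq ha Orc (q # qs) =
     (let a = Orc q; hq' = hq @ [q]; ha' = ha @ [a]
      in a # oracle_answers adv hq' ha' (adv hq' ha' Orc) qs)"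

definition uniform_queries :: "nat \<Rightarrow> nat \<Rightarrow> nat list pmf" where
  "uniform_queries n k = pmf_of_set {qs. set qs \<subseteq> {..<n} \<and> length qs = k}"

definition accept_prob :: "nat \<Rightarrow> nat \<Rightarrow> (nat list \<Rightarrow> real list \<Rightarrow> bool pmf) \<Rightarrow> adversary \<Rightarrow> (nat \<Rightarrow> real) \<Rightarrow> real" where
  "accept_prob n k dec adv f =
     pmf (bind_pmf (uniform_queries n k) (\<lambda>qs. dec qs (oracle_answers adv [] [] f qs))) True"

definition online_resilient_sortedness_tester ::
  "nat \<Rightarrow> nat \<Rightarrow> nat \<Rightarrow> real \<Rightarrow> nat \<Rightarrow> (nat list \<Rightarrow> real list \<Rightarrow> bool pmf) \<Rightarrow> bool" where
  "online_resilient_sortedness_tester n r t \<epsilon> k dec \<longleftrightarrow>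
     (\<forall>f adv. card (f ` {..<n}) \<le> r \<longrightarrow> t_online_adversary n t adv \<longrightarrow>
        (sorted_on n f \<longrightarrow> accept_prob n k dec adv f \<ge> 2/3) \<and>
        (far_from_sorted n \<epsilon> f \<longrightarrow> accept_prob n k dec adv f \<le> 1/3))"

end

theory Submission
  imports Defs
begin
definition LL :: "nat \<Rightarrow> nat \<Rightarrow> nat list set" where
  "LL n k = {xs. set xs \<subseteq> {..<n} \<and> length xs = k}"

lemma card_LL: "card (LL n k) = n ^ k"
  unfolding LL_def using card_lists_length_eq[of "{..<n}" k] by simp

lemma finite_LL: "finite (LL n k)"
  unfolding LL_def using finite_lists_length_eq[of "{..<n}" k] by simp

lemma LL_Suc: "LL n (Suc k) = (\<lambda>(x,xs). x # xs) ` ({..<n} \<times> LL n k)"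
  by (auto simp: LL_def length_Suc_conv image_iff)

lemma sum_LL_Suc:
  "(\<Sum>xs\<in>LL n (Suc k). F xs) = (\<Sum>x<n. \<Sum>xs\<in>LL n k. F (x # xs))"
proof -
  have inj: "inj_on (\<lambda>(x,xs). x # xs) ({..<n} \<times> LL n k)" by (auto simp: inj_on_def)
  have "(\<Sum>xs\<in>LL n (Suc k). F xs) = (\<Sum>p\<in>{..<n} \<times> LL n k. F (case p of (x,xs) \<Rightarrow> x # xs))"
    unfolding LL_Suc by (subst sum.reindex[OF inj]) (simp add: case_prod_unfold)
  also have "\<dots> = (\<Sum>x<n. \<Sum>xs\<in>LL n k. F (x # xs))"
    by (simp add: sum.cartesian_product split_def)
  finally show ?thesis .
qed

lemma LL_0: "LL n 0 = {[]}" by (auto simp: LL_def)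

lemma sum_LL_const: "(\<Sum>xs\<in>LL n k. (c::real)) = real n ^ k * c"
  by (simp add: card_LL)

lemma sum_LL_append:
  "(\<Sum>qs\<in>LL n (a + b). F qs) = (\<Sum>as\<in>LL n a. \<Sum>bs\<in>LL n b. F (as @ bs))"
proof (induction a arbitrary: F)
  case 0
  then show ?case by (simp add: LL_0)
next
  case (Suc a)
  have "(\<Sum>qs\<in>LL n (Suc a + b). F qs) = (\<Sum>x<n. \<Sum>qs\<in>LL n (a + b). F (x # qs))"
    using sum_LL_Suc[where n=n and k="a+b" and F=F] by simp
  also have "\<dots> = (\<Sum>x<n. \<Sum>as\<in>LL n a. \<Sum>bs\<in>LL n b. F (x # as @ bs))"
    using Suc.IH by simp
  also have "\<dots> = (\<Sum>as\<in>LL n (Suc a). \<Sum>bs\<in>LL n b. F (as @ bs))"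
    using sum_LL_Suc[where n=n and k=a and F="\<lambda>as. \<Sum>bs\<in>LL n b. F (as @ bs)"] by simp
  finally show ?case .
qed

lemma G1:
  assumes "n > 0"
  shows "(\<Sum>xs\<in>LL n k. sum_list (map (\<phi>::nat\<Rightarrow>real) xs)) = real k * real n ^ k * ((\<Sum>x<n. \<phi> x) / real n)"
proof (induction k)
  case 0
  then show ?case by (simp add: LL_0)
next
  case (Suc k)
  have "(\<Sum>xs\<in>LL n (Suc k). sum_list (map \<phi> xs)) = (\<Sum>x<n. \<Sum>xs\<in>LL n k. \<phi> x + sum_list (map \<phi> xs))"
    by (simp add: sum_LL_Suc)
  also have "\<dots> = (\<Sum>x<n. real n ^ k * \<phi> x + real k * real n ^ k * ((\<Sum>x<n. \<phi> x) / real n))"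
    by (simp add: sum.distrib Suc.IH sum_LL_const card_LL)
  also have "\<dots> = real n ^ k * (\<Sum>x<n. \<phi> x) + real n * (real k * real n ^ k * ((\<Sum>x<n. \<phi> x) / real n))"
    by (simp add: sum.distrib sum_distrib_left)
  also have "\<dots> = real (Suc k) * real n ^ Suc k * ((\<Sum>x<n. \<phi> x) / real n)"
    using assms by (simp add: field_simps)
  finally show ?case .
qed

lemma G2:
  assumes "n > 0"
  shows "(\<Sum>xs\<in>LL n k. (sum_list (map (\<phi>::nat\<Rightarrow>real) xs))^2) = real n ^ k *
     (real k * ((\<Sum>x<n. (\<phi> x)^2) / real n) + real k * (real k - 1) * ((\<Sum>x<n. \<phi> x) / real n)^2)"
proof (induction k)
  case 0
  then show ?case by (simp add: LL_0)
next
  case (Suc k)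
  define S where "S = (\<Sum>x<n. \<phi> x)"
  define S2 where "S2 = (\<Sum>x<n. (\<phi> x)^2)"
  have "(\<Sum>xs\<in>LL n (Suc k). (sum_list (map \<phi> xs))^2) = (\<Sum>x<n. \<Sum>xs\<in>LL n k. (\<phi> x)^2 + 2 * \<phi> x * sum_list (map \<phi> xs) + (sum_list (map \<phi> xs))^2)"
    by (simp add: sum_LL_Suc power2_eq_square algebra_simps)
  also have "\<dots> = (\<Sum>x<n. real n ^ k * (\<phi> x)^2 + 2 * \<phi> x * (real k * real n ^ k * (S / real n)) + real n ^ k *
     (real k * (S2 / real n) + real k * (real k - 1) * (S / real n)^2))"
    by (simp add: sum.distrib Suc.IH sum_LL_const card_LL G1[OF assms] sum_distrib_left[symmetric] S_def S2_def)
  also have "\<dots> = real n ^ k * S2 + 2 * S * (real k * real n ^ k * (S / real n)) + real n * (real n ^ k *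
     (real k * (S2 / real n) + real k * (real k - 1) * (S / real n)^2))"
  proof -
    have e: "(\<Sum>x<n. 2 * \<phi> x * c) = 2 * S * c" for c
      by (simp add: S_def sum_distrib_left sum_distrib_right mult.assoc)
    show ?thesis
      using assms by (simp only: sum.distrib e sum_distrib_left[symmetric] S2_def) (simp add: field_simps)
  qed
  also have "\<dots> = real n ^ Suc k *
     (real (Suc k) * (S2 / real n) + real (Suc k) * (real (Suc k) - 1) * (S / real n)^2)"
    using assms by (simp add: field_simps power2_eq_square)
  finally show ?case by (simp add: S_def S2_def)
qed

lemma sum_sum_list_swap:
  "(\<Sum>y<n. sum_list (map (\<lambda>x. (Y::nat\<Rightarrow>nat\<Rightarrow>real) x y) as)) = sum_list (map (\<lambda>x. \<Sum>y<n. Y x y) as)"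
  by (induction as) (simp_all add: sum.distrib)



lemma aux_lin2:
  "(\<Sum>y\<in>A. a * (b * (c y / d) + e * (g y / d)^2)) = (a::real) * (b * ((\<Sum>y\<in>A. c y) / d) + e * ((\<Sum>y\<in>A. (g y)^2) / d^2))"
proof -
  have "(\<Sum>y\<in>A. a * (b * (c y / d) + e * (g y / d)^2)) = (\<Sum>y\<in>A. (a * b / d) * c y + (a * e / d^2) * (g y)^2)"
    by (intro sum.cong refl) (simp add: power_divide algebra_simps)
  also have "\<dots> = (a * b / d) * (\<Sum>y\<in>A. c y) + (a * e / d^2) * (\<Sum>y\<in>A. (g y)^2)"
    by (simp add: sum.distrib sum_distrib_left)
  finally show ?thesis by (simp add: algebra_simps)
qed

lemma aux_lin:
  "(\<Sum>y<n. a * (b * (c y / d) + e * (c y / d)^2)) = (a::real) * (b * ((\<Sum>y<n. c y) / d) + e * ((\<Sum>y<n. (c y)^2) / d^2))"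
  by (rule aux_lin2)

lemma arithE2:
  fixes a n m P Q1 Q2 :: real
  assumes "n > 0"
  shows "a*(m*((a*(m*(P/n)+m*(m-1)*(Q2/n^2)))/n) + m*(m-1)*((a*(m*(Q1/n)+m*(m-1)*(P/n)^2))/n^2)) = a*a*(m^2*(P/n^2) + m^2*(m-1)*((Q1+Q2)/n^3) + m^2*(m-1)^2*(P/n^2)^2)"
  using assms by (simp add: field_simps power2_eq_square power3_eq_cube power4_eq_xxxx)

lemma second_moment:
  fixes Y :: "nat \<Rightarrow> nat \<Rightarrow> real"
  assumes n: "n > 0" and m: "m > 0"
    and Y01: "\<And>x y. Y x y = 0 \<or> Y x y = 1"
    and P: "P = (\<Sum>x<n. \<Sum>y<n. Y x y)" and Ppos: "P > 0"
    and Q1: "Q1 = (\<Sum>x<n. (\<Sum>y<n. Y x y)^2)"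
    and Q2: "Q2 = (\<Sum>y<n. (\<Sum>x<n. Y x y)^2)"
  shows "(\<Sum>as\<in>LL n m. \<Sum>bs\<in>LL n m.
            (if sum_list (map (\<lambda>y. sum_list (map (\<lambda>x. Y x y) as)) bs) = 0 then 1 else 0))
         / real n ^ (2*m) \<le> real n ^ 2 / (real m ^ 2 * P) + real n * (Q1 + Q2) / (real m * P^2)"
proof -
  define \<Phi> where "\<Phi> = (\<lambda>as y. sum_list (map (\<lambda>x. Y x y) as))"
  define X where "X as bs = sum_list (map (\<Phi> as) bs)" for as bs
  define \<psi> where "\<psi> x = (\<Sum>y<n. Y x y)" for x
  define N where "N = real n ^ (2*m)"
  define p where "p = P / real n ^ 2"
  define q where "q = (Q1 + Q2) / real n ^ 3"
  have nr: "real n > 0" using n by simp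
  have Npos: "N > 0" using nr by (simp add: N_def)
  have NN: "real n ^ m * real n ^ m = N" by (simp add: N_def power_add[symmetric] mult_2)
  have YY: "Y x y ^ 2 = Y x y" for x y using Y01[of x y] by auto
  have sumPhi: "(\<Sum>y<n. \<Phi> as y) = sum_list (map \<psi> as)" for as
    unfolding \<Phi>_def \<psi>_def by (rule sum_sum_list_swap)
  have Psi: "(\<Sum>x<n. \<psi> x) = P" by (simp add: P \<psi>_def)
  have Q1': "(\<Sum>x<n. (\<psi> x)^2) = Q1" by (simp add: Q1 \<psi>_def)
  have E1: "(\<Sum>as\<in>LL n m. \<Sum>bs\<in>LL n m. X as bs) = N * real m ^ 2 * p"
  proof -
    have "(\<Sum>as\<in>LL n m. \<Sum>bs\<in>LL n m. X as bs) =
       (\<Sum>as\<in>LL n m. real m * real n ^ m * ((\<Sum>y<n. \<Phi> as y) / real n))"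
      unfolding X_def by (simp add: G1[OF n])
    also have "\<dots> = real m * real n ^ m / real n * (\<Sum>as\<in>LL n m. sum_list (map \<psi> as))"
      by (simp add: sumPhi sum_distrib_left sum_divide_distrib)
    also have "\<dots> = real m * real n ^ m / real n * (real m * real n ^ m * (P / real n))"
      by (simp add: G1[OF n] Psi)
    also have "\<dots> = N * real m ^ 2 * p"
      using nr by (simp add: p_def NN[symmetric] field_simps power2_eq_square)
    finally show ?thesis .
  qed
  have A1: "(\<Sum>as\<in>LL n m. \<Sum>y<n. (\<Phi> as y)^2) = real n ^ m * (real m * (P / real n) + real m * (real m - 1) * (Q2 / real n ^ 2))"
  proof -
    have "(\<Sum>as\<in>LL n m. \<Sum>y<n. (\<Phi> as y)^2) = (\<Sum>y<n. \<Sum>as\<in>LL n m. (\<Phi> as y)^2)"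
      by (rule sum.swap)
    also have "\<dots> = (\<Sum>y<n. real n ^ m * (real m * ((\<Sum>x<n. Y x y) / real n) + real m * (real m - 1) * ((\<Sum>x<n. Y x y) / real n)^2))"
      unfolding \<Phi>_def by (intro sum.cong refl) (simp only: G2[OF n] YY)
    also have "\<dots> = real n ^ m * (real m * (P / real n) + real m * (real m - 1) * (Q2 / real n ^ 2))"
      using aux_lin[of "real n ^ m" "real m" _ "real n" "real m * (real m - 1)" n] by (simp add: P Q2 sum.swap[of "\<lambda>x y. Y x y"])
    finally show ?thesis .
  qed
  have A2: "(\<Sum>as\<in>LL n m. (\<Sum>y<n. \<Phi> as y)^2) = real n ^ m * (real m * (Q1 / real n) + real m * (real m - 1) * (P / real n)^2)"
    by (simp add: sumPhi G2[OF n] Q1' Psi)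
  have E2: "(\<Sum>as\<in>LL n m. \<Sum>bs\<in>LL n m. (X as bs)^2) =
     N * (real m ^ 2 * p + real m ^ 2 * (real m - 1) * q + real m ^ 2 * (real m - 1)^2 * p^2)"
  proof -
    have "(\<Sum>as\<in>LL n m. \<Sum>bs\<in>LL n m. (X as bs)^2) =
      (\<Sum>as\<in>LL n m. real n ^ m * (real m * ((\<Sum>y<n. (\<Phi> as y)^2) / real n) + real m * (real m - 1) * ((\<Sum>y<n. \<Phi> as y) / real n)^2))"
      unfolding X_def by (simp add: G2[OF n])
    also have "\<dots> = real n ^ m * (real m * ((\<Sum>as\<in>LL n m. \<Sum>y<n. (\<Phi> as y)^2) / real n)
       + real m * (real m - 1) * ((\<Sum>as\<in>LL n m. (\<Sum>y<n. \<Phi> as y)^2) / real n ^ 2))"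
      by (rule aux_lin2)
    also have "\<dots> = N * (real m ^ 2 * p + real m ^ 2 * (real m - 1) * q + real m ^ 2 * (real m - 1)^2 * p^2)"
      unfolding A1 A2 using nr
      unfolding A1 A2 p_def q_def NN[symmetric] using arithE2[OF nr, of "real n ^ m" "real m" P Q2 Q1] by simp
    finally show ?thesis .
  qed
  define \<mu> where "\<mu> = real m ^ 2 * p"
  define Z where "Z = (\<Sum>as\<in>LL n m. \<Sum>bs\<in>LL n m. (if X as bs = 0 then 1 else 0::real))"
  have ppos: "p > 0" using Ppos nr by (simp add: p_def)
  have qnn: "q \<ge> 0" using nr by (simp add: q_def Q1 Q2 sum_nonneg)
  have mr: "real m \<ge> 1" using m by simp
  have "Z * \<mu>^2 = (\<Sum>as\<in>LL n m. \<Sum>bs\<in>LL n m. (if X as bs = 0 then \<mu>^2 else 0))"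
    unfolding Z_def sum_distrib_right by (intro sum.cong refl) simp
  also have "\<dots> \<le> (\<Sum>as\<in>LL n m. \<Sum>bs\<in>LL n m. (X as bs - \<mu>)^2)"
    by (intro sum_mono) auto
  also have "\<dots> = (\<Sum>as\<in>LL n m. \<Sum>bs\<in>LL n m. (X as bs)^2) - 2 * \<mu> * (\<Sum>as\<in>LL n m. \<Sum>bs\<in>LL n m. X as bs) + N * \<mu>^2"
    by (simp add: power2_diff sum.distrib sum_subtractf sum_distrib_left card_LL NN[symmetric] algebra_simps)
  also have "\<dots> = N * (real m ^ 2 * p + real m ^ 2 * (real m - 1) * q + real m ^ 2 * (real m - 1)^2 * p^2 - \<mu>^2)"
    unfolding E1 E2 \<mu>_def by (simp add: algebra_simps power2_eq_square)
  also have "\<dots> \<le> N * (real m ^ 2 * p + real m ^ 3 * q)"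
  proof -
    have "real m ^ 2 * (real m - 1) * q \<le> real m ^ 3 * q"
      using qnn mr by (intro mult_right_mono) (auto simp: power3_eq_cube power2_eq_square)
    moreover have "real m ^ 2 * (real m - 1)^2 * p^2 \<le> \<mu>^2"
      unfolding \<mu>_def using mr ppos
      by (auto simp: power2_eq_square intro!: mult_right_mono mult_mono)
    ultimately show ?thesis using Npos by (intro mult_left_mono) auto
  qed
  finally have Zb: "Z * \<mu>^2 \<le> N * (real m ^ 2 * p + real m ^ 3 * q)" .
  have mupos: "\<mu> > 0" using ppos mr by (simp add: \<mu>_def)
  have "Z / N \<le> (real m ^ 2 * p + real m ^ 3 * q) / \<mu>^2"
    using Zb Npos mupos by (simp add: field_simps)
  also have "\<dots> = 1 / (real m ^ 2 * p) + q / (real m * p^2)"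
    using mr ppos by (simp add: \<mu>_def field_simps power2_eq_square power3_eq_cube)
  also have "\<dots> = real n ^ 2 / (real m ^ 2 * P) + real n * (Q1 + Q2) / (real m * P^2)"
    using nr Ppos mr by (simp add: p_def q_def field_simps power2_eq_square power3_eq_cube)
  finally show ?thesis by (simp add: Z_def X_def \<Phi>_def N_def)
qed

lemma LL_nonempty: "n > 0 \<Longrightarrow> LL n k \<noteq> {}"
  by (auto simp: LL_def intro!: exI[of _ "replicate k 0"])

lemma card_eq_sum_if: "finite S \<Longrightarrow> real (card {x\<in>S. P x}) = (\<Sum>x\<in>S. if P x then 1 else 0)"
  by (simp add: sum.If_cases Int_def)

lemma accept_prob_det:
  assumes "n > 0"
  shows "accept_prob n k (\<lambda>qs as. return_pmf (D qs as)) adv f =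
    (\<Sum>qs\<in>LL n k. if D qs (oracle_answers adv [] [] f qs) then 1 else 0) / real n ^ k"
proof -
  have ne: "LL n k \<noteq> {}" using LL_nonempty[OF assms] .
  have "accept_prob n k (\<lambda>qs as. return_pmf (D qs as)) adv f =
     pmf (map_pmf (\<lambda>qs. D qs (oracle_answers adv [] [] f qs)) (pmf_of_set (LL n k))) True"
    unfolding accept_prob_def uniform_queries_def map_pmf_def LL_def ..
  also have "\<dots> = measure (pmf_of_set (LL n k)) {qs. D qs (oracle_answers adv [] [] f qs)}"
    by (simp add: pmf_map vimage_def)
  also have "\<dots> = real (card (LL n k \<inter> {qs. D qs (oracle_answers adv [] [] f qs)})) / real (card (LL n k))"
    using ne finite_LL by (simp add: measure_pmf_of_set)
  also have "\<dots> = (\<Sum>qs\<in>LL n k. if D qs (oracle_answers adv [] [] f qs) then 1 else 0) / real n ^ k"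
    using card_eq_sum_if[OF finite_LL, of n k "\<lambda>qs. D qs (oracle_answers adv [] [] f qs)"]
    by (simp add: card_LL Int_def conj_commute)
  finally show ?thesis .
qed

lemma bad_count:
  assumes n: "n > 0" and adv: "t_online_adversary n t adv"
  shows "real n * (\<Sum>qs\<in>LL n k. if oracle_answers adv hq ha Orc qs \<noteq> map f qs then 1 else 0)
     \<le> real n ^ k * real k * (real (card {x\<in>{..<n}. Orc x \<noteq> f x}) + real k * real t)"
proof (induction k arbitrary: hq ha Orc)
  case 0
  then show ?case by (simp add: LL_0)
next
  case (Suc k)
  define d where "d = real (card {x\<in>{..<n}. Orc x \<noteq> f x})"
  define O' where "O' x = adv (hq @ [x]) (ha @ [Orc x]) Orc" for x
  define B where "B x = (\<Sum>xs\<in>LL n k. if oracle_answers adv (hq @ [x]) (ha @ [Orc x]) (O' x) xs \<noteq> map f xs then 1 else (0::real))" for x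
  have dO: "real (card {y\<in>{..<n}. O' x y \<noteq> f y}) \<le> d + real t" for x
  proof -
    have "{y\<in>{..<n}. O' x y \<noteq> f y} \<subseteq> {y\<in>{..<n}. Orc y \<noteq> f y} \<union> {y\<in>{..<n}. O' x y \<noteq> Orc y}"
      by auto
    hence "card {y\<in>{..<n}. O' x y \<noteq> f y} \<le> card ({y\<in>{..<n}. Orc y \<noteq> f y} \<union> {y\<in>{..<n}. O' x y \<noteq> Orc y})"
      by (intro card_mono) auto
    also have "\<dots> \<le> card {y\<in>{..<n}. Orc y \<noteq> f y} + card {y\<in>{..<n}. O' x y \<noteq> Orc y}"
      by (rule card_Un_le)
    also have "card {y\<in>{..<n}. O' x y \<noteq> Orc y} \<le> t"
      using adv unfolding t_online_adversary_def O'_def by blast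
    finally show ?thesis unfolding d_def by linarith
  qed
  have IHx: "real n * B x \<le> real n ^ k * real k * (d + real t + real k * real t)" for x
  proof -
    have "real n * B x \<le> real n ^ k * real k * (real (card {y\<in>{..<n}. O' x y \<noteq> f y}) + real k * real t)"
      unfolding B_def by (rule Suc.IH)
    also have "\<dots> \<le> real n ^ k * real k * (d + real t + real k * real t)"
      using dO[of x] by (intro mult_left_mono) auto
    finally show ?thesis .
  qed
  have "(\<Sum>qs\<in>LL n (Suc k). if oracle_answers adv hq ha Orc qs \<noteq> map f qs then 1 else 0)
     = (\<Sum>x<n. \<Sum>xs\<in>LL n k. if Orc x # oracle_answers adv (hq @ [x]) (ha @ [Orc x]) (O' x) xs \<noteq> f x # map f xs then 1 else (0::real))"
    by (simp add: sum_LL_Suc O'_def Let_def)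
  also have "\<dots> \<le> (\<Sum>x<n. \<Sum>xs\<in>LL n k. (if Orc x \<noteq> f x then 1 else 0) + (if oracle_answers adv (hq @ [x]) (ha @ [Orc x]) (O' x) xs \<noteq> map f xs then 1 else (0::real)))"
    by (intro sum_mono) auto
  also have "\<dots> = (\<Sum>x<n. real n ^ k * (if Orc x \<noteq> f x then 1 else 0) + B x)"
    by (simp add: sum.distrib B_def sum_LL_const card_LL)
  also have "\<dots> = real n ^ k * d + (\<Sum>x<n. B x)"
  proof -
    have cD: "(\<Sum>x<n. if Orc x \<noteq> f x then 1 else 0) = d"
      using card_eq_sum_if[of "{..<n}" "\<lambda>x. Orc x \<noteq> f x"] by (simp add: d_def)
    show ?thesis by (simp add: sum.distrib sum_distrib_left[symmetric] cD)
  qed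
  finally have S: "(\<Sum>qs\<in>LL n (Suc k). if oracle_answers adv hq ha Orc qs \<noteq> map f qs then 1 else 0) \<le> real n ^ k * d + (\<Sum>x<n. B x)" .
  have "real n * (\<Sum>x<n. B x) \<le> (\<Sum>x<n::nat. real n ^ k * real k * (d + real t + real k * real t))"
    unfolding sum_distrib_left using IHx by (intro sum_mono) auto
  also have "\<dots> = real n * (real n ^ k * real k * (d + real t + real k * real t))" by simp
  finally have SB: "real n * (\<Sum>x<n. B x) \<le> real n * (real n ^ k * real k * (d + real t + real k * real t))" .
  have "real n * (\<Sum>qs\<in>LL n (Suc k). if oracle_answers adv hq ha Orc qs \<noteq> map f qs then 1 else 0)
     \<le> real n * (real n ^ k * d) + real n * (real n ^ k * real k * (d + real t + real k * real t))"
    using S SB n by (smt (verit) mult_left_mono of_nat_0_le_iff distrib_left)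
  also have "\<dots> \<le> real n ^ Suc k * real (Suc k) * (d + real (Suc k) * real t)"
  proof -
    have "d + real k * (d + real t + real k * real t) \<le> real (Suc k) * (d + real (Suc k) * real t)"
      by (simp add: algebra_simps)
    then have "real n ^ Suc k * (d + real k * (d + real t + real k * real t)) \<le> real n ^ Suc k * (real (Suc k) * (d + real (Suc k) * real t))"
      by (intro mult_left_mono) auto
    then show ?thesis by (simp add: algebra_simps)
  qed
  finally show ?case by (simp add: d_def)
qed

definition is_match :: "nat \<Rightarrow> (nat \<Rightarrow> real) \<Rightarrow> (nat \<times> nat) set \<Rightarrow> bool" where
  "is_match n f M \<longleftrightarrow> M \<subseteq> {..<n} \<times> {..<n} \<and> (\<forall>p\<in>M. fst p < snd p \<and> f (snd p) < f (fst p))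
     \<and> inj_on fst M \<and> inj_on snd M"

lemma exists_matching:
  assumes far: "far_from_sorted n \<epsilon> f"
  shows "\<exists>M. is_match n f M \<and> \<epsilon> * real n \<le> 2 * real (card M)"
proof (cases "n = 0")
  case True
  then show ?thesis by (intro exI[of _ "{}"]) (auto simp: is_match_def)
next
  case False
  define MS where "MS = {M. is_match n f M}"
  have finMS: "finite MS"
    by (rule finite_subset[of _ "Pow ({..<n} \<times> {..<n})"]) (auto simp: MS_def is_match_def)
  have "{} \<in> MS" by (simp add: MS_def is_match_def)
  then have "Max (card ` MS) \<in> card ` MS" using finMS by (intro Max_in) auto
  then obtain M where M: "M \<in> MS" and Mc: "card M = Max (card ` MS)" by auto
  have Mmax: "card M' \<le> card M" if "M' \<in> MS" for M'
    unfolding Mc using finMS that by (intro Max_ge) auto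
  have Mm: "is_match n f M" using M by (simp add: MS_def)
  have finM: "finite M"
    using Mm by (auto simp: is_match_def intro: finite_subset)
  define C where "C = fst ` M \<union> snd ` M"
  have cover: "x \<in> C \<or> y \<in> C" if "x < y" "y < n" "f y < f x" for x y
  proof (rule ccontr)
    assume "\<not> (x \<in> C \<or> y \<in> C)"
    hence nx: "x \<notin> fst ` M" and ny: "y \<notin> snd ` M" by (auto simp: C_def)
    have "insert (x,y) M \<in> MS"
      using Mm that nx ny by (auto simp: MS_def is_match_def inj_on_def image_iff)
    moreover have "(x,y) \<notin> M" using nx by force
    ultimately have "card M + 1 \<le> card M" using Mmax[of "insert (x,y) M"] finM by simp
    thus False by simp
  qed
  define m0 where "m0 = Min (f ` {..<n})"
  define g where "g z = Max (insert m0 (f ` {w. w < n \<and> w \<notin> C \<and> w \<le> z}))" for z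
  have sg: "sorted_on n g"
    unfolding sorted_on_def g_def
  proof (intro allI impI)
    fix x y assume "x < y \<and> y < n"
    then have "insert m0 (f ` {w. w < n \<and> w \<notin> C \<and> w \<le> x}) \<subseteq> insert m0 (f ` {w. w < n \<and> w \<notin> C \<and> w \<le> y})"
      by auto
    then show "Max (insert m0 (f ` {w. w < n \<and> w \<notin> C \<and> w \<le> x})) \<le> Max (insert m0 (f ` {w. w < n \<and> w \<notin> C \<and> w \<le> y}))"
      by (rule Max_mono) auto
  qed
  have gf: "g z = f z" if "z < n" "z \<notin> C" for z
    unfolding g_def
  proof (rule Max_eqI)
    show "finite (insert m0 (f ` {w. w < n \<and> w \<notin> C \<and> w \<le> z}))" by simp
    show "f z \<in> insert m0 (f ` {w. w < n \<and> w \<notin> C \<and> w \<le> z})" using that by auto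
    fix v assume "v \<in> insert m0 (f ` {w. w < n \<and> w \<notin> C \<and> w \<le> z})"
    then show "v \<le> f z"
    proof
      assume "v = m0" thus ?thesis using that by (auto simp: m0_def intro!: Min_le)
    next
      assume "v \<in> f ` {w. w < n \<and> w \<notin> C \<and> w \<le> z}"
      then obtain w where w: "w < n" "w \<notin> C" "w \<le> z" "v = f w" by auto
      show ?thesis
      proof (cases "w = z")
        case True thus ?thesis using w by simp
      next
        case False
        hence "w < z" using w by simp
        thus ?thesis using cover[of w z] w that by force
      qed
    qed
  qed
  have "real (card {x \<in> {..<n}. f x \<noteq> g x}) \<ge> \<epsilon> * real n"
    using far sg unfolding far_from_sorted_def by blast
  moreover have "card {x \<in> {..<n}. f x \<noteq> g x} \<le> card C"
  proof (rule card_mono)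
    show "finite C" using finM by (simp add: C_def)
    show "{x \<in> {..<n}. f x \<noteq> g x} \<subseteq> C" using gf by fastforce
  qed
  moreover have "card C \<le> 2 * card M"
  proof -
    have "card C \<le> card (fst ` M) + card (snd ` M)" unfolding C_def by (rule card_Un_le)
    also have "\<dots> \<le> card M + card M" by (intro add_mono card_image_le finM)
    finally show ?thesis by simp
  qed
  ultimately show ?thesis using Mm by (intro exI[of _ M]) auto
qed

definition cw :: "(nat \<Rightarrow> real) \<Rightarrow> (nat \<times> nat) set \<Rightarrow> nat \<times> nat \<Rightarrow> nat" where
  "cw f M p = card {p'\<in>M. f (snd p') = f (snd p)}"

definition edge :: "(nat \<Rightarrow> real) \<Rightarrow> (nat \<times> nat) set \<Rightarrow> nat \<Rightarrow> nat \<Rightarrow> bool" where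
  "edge f M x y \<longleftrightarrow> (\<exists>p\<in>M. \<exists>p'\<in>M. fst p = x \<and> snd p' = y \<and> f (snd p) = f (snd p') \<and> x < y)"

context
  fixes n f M
  assumes Mm: "is_match n f M"
begin

lemma finM: "finite M"
  using Mm by (auto simp: is_match_def intro: finite_subset)

lemma edge_viol: "edge f M x y \<Longrightarrow> x < y \<and> f y < f x \<and> y < n"
  using Mm unfolding edge_def is_match_def by fastforce

lemma cw_class: "p \<in> M \<Longrightarrow> p' \<in> M \<Longrightarrow> f (snd p') = f (snd p) \<Longrightarrow> cw f M p' = cw f M p"
  unfolding cw_def by metis

lemma cw_sq: "p \<in> M \<Longrightarrow> real (cw f M p) ^ 2 \<le> (\<Sum>q\<in>M. real (cw f M q))"
proof -
  assume p: "p \<in> M"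
  define K where "K = {p'\<in>M. f (snd p') = f (snd p)}"
  have "real (cw f M p) ^ 2 = (\<Sum>q\<in>K. real (cw f M p))"
    by (simp add: K_def cw_def power2_eq_square)
  also have "\<dots> = (\<Sum>q\<in>K. real (cw f M q))"
    using cw_class[OF p] by (intro sum.cong) (auto simp: K_def)
  also have "\<dots> \<le> (\<Sum>q\<in>M. real (cw f M q))"
    using finM by (intro sum_mono2) (auto simp: K_def)
  finally show ?thesis .
qed

lemma P_lower:
  "(\<Sum>q\<in>M. real (cw f M q)) \<le> 2 * (\<Sum>x<n. \<Sum>y<n. if edge f M x y then 1 else (0::real))"
proof -
  define E where "E = {xy \<in> {..<n} \<times> {..<n}. edge f M (fst xy) (snd xy)}"
  define Pi where "Pi = {pp \<in> M \<times> M. f (snd (fst pp)) = f (snd (snd pp)) \<and> fst (fst pp) < snd (snd pp)}"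
  define Same where "Same = {pp \<in> M \<times> M. f (snd (fst pp)) = f (snd (snd pp))}"
  have finMM: "finite (M \<times> M)" using finM by simp
  have sumE: "(\<Sum>x<n. \<Sum>y<n. if edge f M x y then 1 else (0::real)) = real (card E)"
  proof -
    have "(\<Sum>x<n. \<Sum>y<n. if edge f M x y then 1 else (0::real)) = (\<Sum>xy\<in>{..<n}\<times>{..<n}. if edge f M (fst xy) (snd xy) then 1 else 0)"
      by (subst sum.cartesian_product) (simp add: split_def)
    also have "\<dots> = real (card E)"
      unfolding E_def using card_eq_sum_if[of "{..<n}\<times>{..<n}" "\<lambda>xy. edge f M (fst xy) (snd xy)"] by simp
    finally show ?thesis .
  qed
  have "card Pi \<le> card E"
  proof (rule card_inj_on_le)
    have ifst: "inj_on fst M" and isnd: "inj_on snd M" and MM: "M \<subseteq> {..<n} \<times> {..<n}"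
      using Mm by (auto simp: is_match_def)
    show "inj_on (\<lambda>pp. (fst (fst pp), snd (snd pp))) Pi"
    proof (rule inj_onI)
      fix pp qq assume pq: "pp \<in> Pi" "qq \<in> Pi" "(fst (fst pp), snd (snd pp)) = (fst (fst qq), snd (snd qq))"
      have "fst pp = fst qq" using inj_onD[OF ifst, of "fst pp" "fst qq"] pq by (auto simp: Pi_def)
      moreover have "snd pp = snd qq" using inj_onD[OF isnd, of "snd pp" "snd qq"] pq by (auto simp: Pi_def)
      ultimately show "pp = qq" by (rule prod_eqI)
    qed
    show "(\<lambda>pp. (fst (fst pp), snd (snd pp))) ` Pi \<subseteq> E"
    proof
      fix z assume "z \<in> (\<lambda>pp. (fst (fst pp), snd (snd pp))) ` Pi"
      then obtain p p' where pp: "(p, p') \<in> Pi" "z = (fst p, snd p')" by force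
      have "p \<in> M" "p' \<in> M" "f (snd p) = f (snd p')" "fst p < snd p'" using pp by (auto simp: Pi_def)
      moreover have "fst p < n" "snd p' < n" using MM \<open>p \<in> M\<close> \<open>p' \<in> M\<close> by auto
      ultimately show "z \<in> E" unfolding E_def edge_def using pp(2) by auto
    qed
    show "finite E" unfolding E_def by simp
  qed
  have "Same \<subseteq> Pi \<union> prod.swap ` Pi"
  proof
    fix pp assume pp: "pp \<in> Same"
    obtain p p' where pp': "pp = (p, p')" by (cases pp) blast
    have pM: "p \<in> M" "p' \<in> M" "f (snd p) = f (snd p')" using pp pp' by (auto simp: Same_def)
    have "fst p < snd p" "fst p' < snd p'" using Mm pM by (auto simp: is_match_def)
    hence "fst p < snd p' \<or> fst p' < snd p" by linarith
    thus "pp \<in> Pi \<union> prod.swap ` Pi"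
    proof
      assume "fst p < snd p'" thus ?thesis using pM pp' by (auto simp: Pi_def)
    next
      assume "fst p' < snd p"
      hence "(p', p) \<in> Pi" using pM by (auto simp: Pi_def)
      hence "prod.swap (p', p) \<in> prod.swap ` Pi" by (rule imageI)
      thus ?thesis using pp' by simp
    qed
  qed
  have finPi: "finite Pi" using finMM by (auto simp: Pi_def intro: finite_subset)
  have "card Same \<le> card (Pi \<union> prod.swap ` Pi)"
    using \<open>Same \<subseteq> _\<close> finPi by (intro card_mono) auto
  also have "\<dots> \<le> card Pi + card (prod.swap ` Pi)" by (rule card_Un_le)
  also have "\<dots> \<le> card Pi + card Pi" using card_image_le[OF finPi, of prod.swap] by simp
  finally have cS: "card Same \<le> 2 * card Pi" by simp
  have "Same = Sigma M (\<lambda>p. {p'\<in>M. f (snd p') = f (snd p)})"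
    by (auto simp: Same_def)
  hence "card Same = (\<Sum>p\<in>M. cw f M p)"
    using finM by (simp add: card_SigmaI cw_def)
  hence "(\<Sum>q\<in>M. real (cw f M q)) = real (card Same)" by simp
  also have "\<dots> \<le> 2 * real (card E)" using cS \<open>card Pi \<le> card E\<close> by linarith
  finally show ?thesis using sumE by simp
qed

lemma Q1_upper:
  "(\<Sum>x<n. (\<Sum>y<n. if edge f M x y then 1 else (0::real))^2) \<le> (\<Sum>q\<in>M. real (cw f M q)) * sqrt (\<Sum>q\<in>M. real (cw f M q))"
proof -
  define S2 where "S2 = (\<Sum>q\<in>M. real (cw f M q))"
  define od where "od x = (\<Sum>y<n. if edge f M x y then 1 else (0::real))" for x
  have od_card: "od x = real (card {y\<in>{..<n}. edge f M x y})" for x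
    unfolding od_def using card_eq_sum_if[of "{..<n}" "\<lambda>y. edge f M x y"] by simp
  have od0: "od x = 0" if "x \<notin> fst ` M" for x
    unfolding od_card using that by (auto simp: edge_def)
  have odp: "od (fst p) \<le> real (cw f M p)" if p: "p \<in> M" for p
  proof -
    have "{y\<in>{..<n}. edge f M (fst p) y} \<subseteq> snd ` {p'\<in>M. f (snd p') = f (snd p)}"
    proof
      fix y assume "y \<in> {y\<in>{..<n}. edge f M (fst p) y}"
      then obtain q p' where q: "q \<in> M" "p' \<in> M" "fst q = fst p" "snd p' = y" "f (snd q) = f (snd p')"
        by (auto simp: edge_def)
      have "q = p" using Mm q p by (auto simp: is_match_def inj_on_def)
      thus "y \<in> snd ` {p'\<in>M. f (snd p') = f (snd p)}" using q by force
    qed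
    hence "card {y\<in>{..<n}. edge f M (fst p) y} \<le> card (snd ` {p'\<in>M. f (snd p') = f (snd p)})"
      using finM by (intro card_mono) auto
    also have "\<dots> \<le> cw f M p" unfolding cw_def using finM by (intro card_image_le) auto
    finally show ?thesis unfolding od_card by simp
  qed
  have sub: "fst ` M \<subseteq> {..<n}" using Mm by (auto simp: is_match_def)
  have "(\<Sum>x<n. (od x)^2) = (\<Sum>x\<in>fst ` M. (od x)^2)"
    using sub od0 by (intro sum.mono_neutral_right) auto
  also have "\<dots> = (\<Sum>p\<in>M. (od (fst p))^2)"
    using Mm by (simp add: sum.reindex is_match_def)
  also have "\<dots> \<le> (\<Sum>p\<in>M. real (cw f M p) * sqrt S2)"
  proof (intro sum_mono)
    fix p assume p: "p \<in> M"
    have o0: "0 \<le> od (fst p)" unfolding od_card by simp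
    have "(od (fst p))^2 \<le> real (cw f M p) ^ 2" using odp[OF p] o0 by (intro power_mono) auto
    also have "\<dots> = real (cw f M p) * sqrt (real (cw f M p) ^ 2)" by (simp add: power2_eq_square)
    also have "\<dots> \<le> real (cw f M p) * sqrt S2"
      using cw_sq[OF p] by (intro mult_left_mono real_sqrt_le_mono) (auto simp: S2_def)
    finally show "(od (fst p))^2 \<le> real (cw f M p) * sqrt S2" .
  qed
  also have "\<dots> = S2 * sqrt S2" by (simp add: S2_def sum_distrib_right)
  finally show ?thesis by (simp add: od_def S2_def)
qed

lemma Q2_upper:
  "(\<Sum>y<n. (\<Sum>x<n. if edge f M x y then 1 else (0::real))^2) \<le> (\<Sum>q\<in>M. real (cw f M q)) * sqrt (\<Sum>q\<in>M. real (cw f M q))"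
proof -
  define S2 where "S2 = (\<Sum>q\<in>M. real (cw f M q))"
  define od where "od y = (\<Sum>x<n. if edge f M x y then 1 else (0::real))" for y
  have od_card: "od y = real (card {x\<in>{..<n}. edge f M x y})" for y
    unfolding od_def using card_eq_sum_if[of "{..<n}" "\<lambda>x. edge f M x y"] by simp
  have od0: "od y = 0" if "y \<notin> snd ` M" for y
    unfolding od_card using that by (auto simp: edge_def)
  have odp: "od (snd p) \<le> real (cw f M p)" if p: "p \<in> M" for p
  proof -
    have "{x\<in>{..<n}. edge f M x (snd p)} \<subseteq> fst ` {p'\<in>M. f (snd p') = f (snd p)}"
    proof
      fix x assume "x \<in> {x\<in>{..<n}. edge f M x (snd p)}"
      then obtain q p' where q: "q \<in> M" "p' \<in> M" "fst q = x" "snd p' = snd p" "f (snd q) = f (snd p')"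
        by (auto simp: edge_def)
      have "p' = p" using Mm q p by (auto simp: is_match_def inj_on_def)
      thus "x \<in> fst ` {p'\<in>M. f (snd p') = f (snd p)}" using q by force
    qed
    hence "card {x\<in>{..<n}. edge f M x (snd p)} \<le> card (fst ` {p'\<in>M. f (snd p') = f (snd p)})"
      using finM by (intro card_mono) auto
    also have "\<dots> \<le> cw f M p" unfolding cw_def using finM by (intro card_image_le) auto
    finally show ?thesis unfolding od_card by simp
  qed
  have sub: "snd ` M \<subseteq> {..<n}" using Mm by (auto simp: is_match_def)
  have "(\<Sum>y<n. (od y)^2) = (\<Sum>y\<in>snd ` M. (od y)^2)"
    using sub od0 by (intro sum.mono_neutral_right) auto
  also have "\<dots> = (\<Sum>p\<in>M. (od (snd p))^2)"
    using Mm by (simp add: sum.reindex is_match_def)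
  also have "\<dots> \<le> (\<Sum>p\<in>M. real (cw f M p) * sqrt S2)"
  proof (intro sum_mono)
    fix p assume p: "p \<in> M"
    have o0: "0 \<le> od (snd p)" unfolding od_card by simp
    have "(od (snd p))^2 \<le> real (cw f M p) ^ 2" using odp[OF p] o0 by (intro power_mono) auto
    also have "\<dots> = real (cw f M p) * sqrt (real (cw f M p) ^ 2)" by (simp add: power2_eq_square)
    also have "\<dots> \<le> real (cw f M p) * sqrt S2"
      using cw_sq[OF p] by (intro mult_left_mono real_sqrt_le_mono) (auto simp: S2_def)
    finally show "(od (snd p))^2 \<le> real (cw f M p) * sqrt S2" .
  qed
  also have "\<dots> = S2 * sqrt S2" by (simp add: S2_def sum_distrib_right)
  finally show ?thesis by (simp add: od_def S2_def)
qed

lemma S2_lower: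
  "real (card M) ^ 2 \<le> (\<Sum>q\<in>M. real (cw f M q)) * real (card (f ` {..<n}))"
proof -
  define h :: "nat \<times> nat \<Rightarrow> real" where "h p = f (snd p)" for p
  define B where "B = h ` M"
  define c where "c b = real (card {p\<in>M. h p = b})" for b
  have "real (card M) = (\<Sum>p\<in>M. 1)" by simp
  also have "\<dots> = (\<Sum>b\<in>B. \<Sum>p\<in>{p\<in>M. h p = b}. 1)"
    unfolding B_def by (rule sum.image_gen[OF finM])
  also have "\<dots> = (\<Sum>b\<in>B. c b)" by (simp add: c_def)
  finally have cM: "real (card M) = (\<Sum>b\<in>B. c b)" .
  have "(\<Sum>q\<in>M. real (cw f M q)) = (\<Sum>b\<in>B. \<Sum>p\<in>{p\<in>M. h p = b}. real (cw f M p))"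
    unfolding B_def by (rule sum.image_gen[OF finM])
  also have "\<dots> = (\<Sum>b\<in>B. \<Sum>p\<in>{p\<in>M. h p = b}. c b)"
    by (intro sum.cong refl) (auto simp: cw_def c_def h_def)
  also have "\<dots> = (\<Sum>b\<in>B. (c b)^2)" by (simp add: c_def power2_eq_square)
  finally have S2: "(\<Sum>q\<in>M. real (cw f M q)) = (\<Sum>b\<in>B. (c b)^2)" .
  have BB: "B \<subseteq> f ` {..<n}" using Mm by (auto simp: B_def h_def is_match_def)
  have "real (card M) ^ 2 \<le> (\<Sum>b\<in>B. (c b)^2) * real (card B)"
    unfolding cM by (rule sum_squared_le_sum_of_squares)
  also have "\<dots> \<le> (\<Sum>b\<in>B. (c b)^2) * real (card (f ` {..<n}))"
    using BB by (intro mult_left_mono) (auto intro!: card_mono sum_nonneg)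
  finally show ?thesis unfolding S2 .
qed

end

lemma arith_core:
  fixes n m e r S2 P Q1 Q2 T :: real
  assumes n: "n > 0" and m: "m > 0" and e: "e > 0" and r: "r \<ge> 1"
    and S2: "S2 > 0" and P: "S2 / 2 \<le> P"
    and Q1: "Q1 \<le> S2 * sqrt S2" and Q2: "Q2 \<le> S2 * sqrt S2"
    and Q1n: "0 \<le> Q1" and Q2n: "0 \<le> Q2"
    and ST: "T^2 \<le> S2 * r" and eT: "e * n \<le> 2 * T"
    and me: "m \<ge> 128 * sqrt r / e"
  shows "n^2 / (m^2 * P) + n * (Q1 + Q2) / (m * P^2) \<le> 1/6"
proof -
  define s where "s = sqrt S2"
  define \<rho> where "\<rho> = sqrt r"
  have s0: "s > 0" using S2 by (simp add: s_def)
  have \<rho>1: "\<rho> \<ge> 1" using r by (simp add: \<rho>_def)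
  have ss: "s * s = S2" using S2 by (simp add: s_def)
  have \<rho>\<rho>: "\<rho> * \<rho> = r" using r by (simp add: \<rho>_def)
  have Ppos: "P > 0" using S2 P by linarith
  have T0: "0 \<le> e * n / 2" using e n by simp
  have "(e * n / 2)^2 \<le> T^2" using eT T0 by (intro power_mono) auto
  also have "\<dots> \<le> (s * \<rho>)^2" using ST by (simp add: power_mult_distrib ss[symmetric] \<rho>\<rho>[symmetric] power2_eq_square mult_ac)
  finally have "e * n / 2 \<le> s * \<rho>" using s0 \<rho>1
    by (meson power2_le_imp_le mult_nonneg_nonneg less_imp_le order_trans zero_le_one)
  hence sl: "n \<le> 2 * s * \<rho> / e" using e by (simp add: field_simps)
  have me': "m * e \<ge> 128 * \<rho>" using me e by (simp add: \<rho>_def field_simps)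
  have A: "n^2 / (m^2 * P) \<le> 1/48"
  proof -
    have "n^2 / (m^2 * P) \<le> n^2 / (m^2 * (S2/2))"
      using P S2 m n by (intro divide_left_mono mult_left_mono) auto
    also have "\<dots> = 2 * (n / (m * s))^2" using ss by (simp add: power2_eq_square field_simps)
    also have "n / (m * s) \<le> 2 * \<rho> / (m * e)"
      using sl s0 m e by (simp add: field_simps)
    hence "2 * (n / (m * s))^2 \<le> 2 * (2 * \<rho> / (m * e))^2"
      using n m s0 by (intro mult_left_mono power_mono) auto
    also have "2 * \<rho> / (m * e) \<le> 1/64" using me' \<rho>1 m e by (simp add: field_simps)
    hence "2 * (2 * \<rho> / (m * e))^2 \<le> 2 * (1/64)^2"
      using \<rho>1 m e by (intro mult_left_mono power_mono) auto
    finally have X: "n^2 / (m^2 * P) \<le> 2 * (1/64)^2" .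
    have "2 * (1/64)^2 \<le> (1/48::real)" by (simp add: power2_eq_square)
    with X show ?thesis by linarith
  qed
  have B: "n * (Q1 + Q2) / (m * P^2) \<le> 1/8"
  proof -
    have "n * (Q1 + Q2) / (m * P^2) \<le> n * (2 * (S2 * s)) / (m * (S2/2)^2)"
    proof (intro frac_le mult_left_mono mult_pos_pos power_mono)
      show "Q1 + Q2 \<le> 2 * (S2 * s)" using Q1 Q2 by (simp add: s_def)
    qed (use n m S2 P Q1n Q2n s0 in auto)
    also have "\<dots> = 8 * (n / (m * s))" using ss s0 S2 m by (simp add: power2_eq_square field_simps)
    also have "n / (m * s) \<le> 2 * \<rho> / (m * e)"
      using sl s0 m e by (simp add: field_simps)
    also have "2 * \<rho> / (m * e) \<le> 1/64" using me' \<rho>1 m e by (simp add: field_simps)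
    finally show ?thesis by simp
  qed
  show ?thesis using A B by linarith
qed

definition viol :: "nat list \<Rightarrow> real list \<Rightarrow> bool" where
  "viol qs as \<longleftrightarrow> (\<exists>i<length qs. \<exists>j<length qs. qs ! i < qs ! j \<and> as ! j < as ! i)"

lemma viol_map: "viol qs (map f qs) \<longleftrightarrow> (\<exists>x\<in>set qs. \<exists>y\<in>set qs. x < y \<and> f y < f x)"
proof
  assume "viol qs (map f qs)"
  then obtain i j where ij: "i < length qs" "j < length qs" "qs ! i < qs ! j" "map f qs ! j < map f qs ! i"
    unfolding viol_def by blast
  then show "\<exists>x\<in>set qs. \<exists>y\<in>set qs. x < y \<and> f y < f x"
    by (metis nth_map nth_mem)
next
  assume "\<exists>x\<in>set qs. \<exists>y\<in>set qs. x < y \<and> f y < f x"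
  then obtain x y where xy: "x \<in> set qs" "y \<in> set qs" "x < y" "f y < f x" by blast
  from xy(1) obtain i where i: "i < length qs" "qs ! i = x" by (auto simp: in_set_conv_nth)
  from xy(2) obtain j where j: "j < length qs" "qs ! j = y" by (auto simp: in_set_conv_nth)
  have "i < length qs \<and> j < length qs \<and> qs ! i < qs ! j \<and> map f qs ! j < map f qs ! i"
    using i j xy by simp
  thus "viol qs (map f qs)" unfolding viol_def by blast
qed

lemma sum_list_zero: "(\<And>y. y \<in> set xs \<Longrightarrow> g y = 0) \<Longrightarrow> sum_list (map g xs) = (0::real)"
  by (induction xs) auto

lemma core:
  assumes n: "n > 0" and far: "far_from_sorted n \<epsilon> f" and e: "\<epsilon> > 0"
    and cr: "card (f ` {..<n}) \<le> r" and m: "m > 0" and me: "real m \<ge> 128 * sqrt (real r) / \<epsilon>"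
  shows "(\<Sum>qs\<in>LL n (2*m). if viol qs (map f qs) then 0 else 1) / real n ^ (2*m) \<le> 1/6"
proof -
  obtain M where Mm: "is_match n f M" and eM: "\<epsilon> * real n \<le> 2 * real (card M)"
    using exists_matching[OF far] by blast
  define Y where "Y x y = (if edge f M x y then 1 else (0::real))" for x y
  define P where "P = (\<Sum>x<n. \<Sum>y<n. Y x y)"
  define Q1 where "Q1 = (\<Sum>x<n. (\<Sum>y<n. Y x y)^2)"
  define Q2 where "Q2 = (\<Sum>y<n. (\<Sum>x<n. Y x y)^2)"
  define S2 where "S2 = (\<Sum>q\<in>M. real (cw f M q))"
  have nr: "real n > 0" using n by simp
  have "f 0 \<in> f ` {..<n}" using n by simp
  hence "card (f ` {..<n}) > 0" by (subst card_gt_0_iff) auto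
  hence r'1: "card (f ` {..<n}) \<ge> 1" by simp
  hence r1: "real r \<ge> 1" using cr by simp
  have S2n: "S2 \<ge> 0" by (simp add: S2_def sum_nonneg)
  have cM: "real (card M) > 0" using eM e nr by (smt (verit) mult_pos_pos)
  have SL: "real (card M) ^ 2 \<le> S2 * real (card (f ` {..<n}))"
    using S2_lower[OF Mm] by (simp add: S2_def)
  also have "\<dots> \<le> S2 * real r" using cr S2n by (intro mult_left_mono) auto
  finally have ST: "real (card M) ^ 2 \<le> S2 * real r" .
  have S2pos: "S2 > 0"
  proof (rule ccontr)
    assume "\<not> S2 > 0"
    hence "S2 = 0" using S2n by simp
    thus False using ST cM by simp
  qed
  have PL: "S2 / 2 \<le> P" using P_lower[OF Mm] by (simp add: S2_def P_def Y_def)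
  have Q1U: "Q1 \<le> S2 * sqrt S2" using Q1_upper[OF Mm] by (simp add: S2_def Q1_def Y_def)
  have Q2U: "Q2 \<le> S2 * sqrt S2" using Q2_upper[OF Mm] by (simp add: S2_def Q2_def Y_def)
  have Ppos: "P > 0" using PL S2pos by linarith
  have Y01: "Y x y = 0 \<or> Y x y = 1" for x y by (simp add: Y_def)
  have SM: "(\<Sum>as\<in>LL n m. \<Sum>bs\<in>LL n m.
            (if sum_list (map (\<lambda>y. sum_list (map (\<lambda>x. Y x y) as)) bs) = 0 then 1 else 0))
         / real n ^ (2*m) \<le> real n ^ 2 / (real m ^ 2 * P) + real n * (Q1 + Q2) / (real m * P^2)"
    by (rule second_moment[OF n m Y01 P_def Ppos Q1_def Q2_def])
  also have "\<dots> \<le> 1/6"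
    by (rule arith_core[OF nr _ e r1 S2pos PL Q1U Q2U _ _ ST eM])
       (use m me in \<open>auto simp: Q1_def Q2_def intro!: sum_nonneg\<close>)
  finally have SM6: "(\<Sum>as\<in>LL n m. \<Sum>bs\<in>LL n m.
            (if sum_list (map (\<lambda>y. sum_list (map (\<lambda>x. Y x y) as)) bs) = 0 then 1 else 0))
         / real n ^ (2*m) \<le> 1/6" .
  have "(\<Sum>qs\<in>LL n (2*m). if viol qs (map f qs) then 0 else 1) =
        (\<Sum>as\<in>LL n m. \<Sum>bs\<in>LL n m. if viol (as @ bs) (map f (as @ bs)) then 0 else (1::real))"
    unfolding mult_2 by (rule sum_LL_append)
  also have "\<dots> \<le> (\<Sum>as\<in>LL n m. \<Sum>bs\<in>LL n m.
            (if sum_list (map (\<lambda>y. sum_list (map (\<lambda>x. Y x y) as)) bs) = 0 then 1 else 0))"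
  proof (intro sum_mono)
    fix as bs
    show "(if viol (as @ bs) (map f (as @ bs)) then 0 else (1::real)) \<le>
      (if sum_list (map (\<lambda>y. sum_list (map (\<lambda>x. Y x y) as)) bs) = 0 then 1 else 0)"
    proof (cases "viol (as @ bs) (map f (as @ bs))")
      case False
      have "sum_list (map (\<lambda>y. sum_list (map (\<lambda>x. Y x y) as)) bs) = 0"
      proof (rule sum_list_zero)
        fix y assume y: "y \<in> set bs"
        show "sum_list (map (\<lambda>x. Y x y) as) = 0"
        proof (rule sum_list_zero)
          fix x assume x: "x \<in> set as"
          show "Y x y = 0"
          proof (rule ccontr)
            assume "Y x y \<noteq> 0"
            hence "edge f M x y" by (simp add: Y_def split: if_splits)
            hence "x < y \<and> f y < f x" using edge_viol[OF Mm] by blast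
            hence "viol (as @ bs) (map f (as @ bs))" unfolding viol_map using x y by auto
            thus False using False by simp
          qed
        qed
      qed
      thus ?thesis using False by simp
    qed simp
  qed
  finally have LZ: "(\<Sum>qs\<in>LL n (2*m). if viol qs (map f qs) then 0 else (1::real)) \<le> (\<Sum>as\<in>LL n m. \<Sum>bs\<in>LL n m.
            (if sum_list (map (\<lambda>y. sum_list (map (\<lambda>x. Y x y) as)) bs) = 0 then 1 else 0))" .
  have "(\<Sum>qs\<in>LL n (2*m). if viol qs (map f qs) then 0 else 1) / real n ^ (2*m) \<le> (\<Sum>as\<in>LL n m. \<Sum>bs\<in>LL n m.
            (if sum_list (map (\<lambda>y. sum_list (map (\<lambda>x. Y x y) as)) bs) = 0 then 1 else 0)) / real n ^ (2*m)"
    using LZ by (rule divide_right_mono) simp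
  with SM6 show ?thesis by linarith
qed

lemma sorted_no_viol:
  assumes "sorted_on n f" "set qs \<subseteq> {..<n}"
  shows "\<not> viol qs (map f qs)"
proof
  assume "viol qs (map f qs)"
  then obtain x y where "x \<in> set qs" "y \<in> set qs" "x < y" "f y < f x" unfolding viol_map by blast
  with assms show False unfolding sorted_on_def by force
qed

theorem corollary5p2:
  shows "\<exists>c0 C :: real. c0 > 0 \<and> C > 0 \<and>
    (\<forall>(n::nat) (r::nat) (t::nat) (\<epsilon>::real).
       0 < \<epsilon> \<and> \<epsilon> < 1 \<and> real r * c0 * real t < \<epsilon>^2 * real n \<longrightarrow>
       (\<exists>(k::nat) dec. real k \<le> C * sqrt (real r) / \<epsilon> \<and>
          online_resilient_sortedness_tester n r t \<epsilon> k dec))"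
proof -
  have main: "\<forall>(n::nat) (r::nat) (t::nat) (\<epsilon>::real).
       0 < \<epsilon> \<and> \<epsilon> < 1 \<and> real r * (6 * 258^2) * real t < \<epsilon>^2 * real n \<longrightarrow>
       (\<exists>(k::nat) dec. real k \<le> 258 * sqrt (real r) / \<epsilon> \<and>
          online_resilient_sortedness_tester n r t \<epsilon> k dec)"
  proof (intro allI impI)
  fix n r t :: nat and \<epsilon> :: real
  assume H: "0 < \<epsilon> \<and> \<epsilon> < 1 \<and> real r * (6 * 258^2) * real t < \<epsilon>^2 * real n"
  hence e0: "0 < \<epsilon>" and e1: "\<epsilon> < 1" and Hc: "real r * (6 * 258^2) * real t < \<epsilon>^2 * real n" by auto
  define m where "m = nat \<lceil>128 * sqrt (real r) / \<epsilon>\<rceil>"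
  define k where "k = 2 * m"
  define dec where "dec = (\<lambda>(qs::nat list) (as::real list). return_pmf (\<not> viol qs as))"
  have x0: "0 \<le> 128 * sqrt (real r) / \<epsilon>" using e0 by simp
  have mc: "real m = real_of_int \<lceil>128 * sqrt (real r) / \<epsilon>\<rceil>"
    unfolding m_def using x0 by simp
  have mle: "real m \<le> 128 * sqrt (real r) / \<epsilon> + 1"
    unfolding mc by (rule of_int_ceiling_le_add_one)
  have mge: "real m \<ge> 128 * sqrt (real r) / \<epsilon>"
    unfolding mc by (rule le_of_int_ceiling)
  have kb: "real k \<le> 258 * sqrt (real r) / \<epsilon>"
  proof (cases "r = 0")
    case True
    then show ?thesis by (simp add: k_def m_def)
  next
    case False
    hence s1: "sqrt (real r) \<ge> 1" by simp
    have "1 \<le> sqrt (real r) / \<epsilon>"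
      by (simp only: le_divide_eq_1_pos[OF e0]) (use s1 e1 in linarith)
    hence "real m \<le> 129 * sqrt (real r) / \<epsilon>" using mle by simp
    thus ?thesis by (simp add: k_def)
  qed
  show "\<exists>k dec. real k \<le> 258 * sqrt (real r) / \<epsilon> \<and> online_resilient_sortedness_tester n r t \<epsilon> k dec"
  proof (intro exI[of _ k] exI[of _ dec] conjI kb)
    show "online_resilient_sortedness_tester n r t \<epsilon> k dec"
      unfolding online_resilient_sortedness_tester_def
    proof (intro allI impI)
      fix f :: "nat \<Rightarrow> real" and adv :: adversary
      assume cr: "card (f ` {..<n}) \<le> r" and adv: "t_online_adversary n t adv"
      have n0: "n > 0"
      proof (rule ccontr)
        assume "\<not> n > 0"
        hence "n = 0" by simp
        hence "real r * (6 * 258^2) * real t < 0" using Hc by simp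
        moreover have "0 \<le> real r * (6 * 258^2) * real t" by simp
        ultimately show False by linarith
      qed
      have nr: "real n > 0" using n0 by simp
      have "f 0 \<in> f ` {..<n}" using n0 by simp
      hence "card (f ` {..<n}) > 0" by (subst card_gt_0_iff) auto
      hence r1: "r \<ge> 1" using cr by simp
      have m0: "m > 0" unfolding m_def using r1 e0 by simp
      define ans where "ans qs = oracle_answers adv [] [] f qs" for qs
      define Bad where "Bad = (\<Sum>qs\<in>LL n k. if ans qs \<noteq> map f qs then 1 else (0::real))"
      have Bad0: "Bad \<ge> 0" unfolding Bad_def by (intro sum_nonneg) auto
      have BadB: "real n * Bad \<le> real n ^ k * real k * (0 + real k * real t)"
        using bad_count[OF n0 adv, where k=k and hq="[]" and ha="[]" and Orc=f and f=f] by (simp add: Bad_def ans_def)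
      have kt: "real k * real k * real t \<le> real n / 6"
      proof -
        have "real k * real k \<le> (258 * sqrt (real r) / \<epsilon>) * (258 * sqrt (real r) / \<epsilon>)"
          using kb by (intro mult_mono) auto
        also have "\<dots> = 258^2 * real r / \<epsilon>^2" by (simp add: power2_eq_square)
        finally have "real k * real k * real t \<le> 258^2 * real r / \<epsilon>^2 * real t"
          by (intro mult_right_mono) auto
        also have "\<dots> \<le> real n / 6" using Hc e0 by (simp add: field_simps)
        finally show ?thesis .
      qed
      have BadN: "Bad / real n ^ k \<le> 1/6"
      proof -
        have "real n * Bad \<le> real n ^ k * (real k * real k * real t)" using BadB by (simp add: algebra_simps)
        also have "\<dots> \<le> real n ^ k * (real n / 6)" using kt by (intro mult_left_mono) auto
        finally have "real n * Bad \<le> real n * (real n ^ k / 6)" by (simp add: algebra_simps)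
        hence "Bad \<le> real n ^ k / 6" using nr by simp
        thus ?thesis using nr by (simp add: field_simps)
      qed
      have AP: "accept_prob n k dec adv f = (\<Sum>qs\<in>LL n k. if \<not> viol qs (ans qs) then 1 else 0) / real n ^ k"
        unfolding dec_def ans_def by (rule accept_prob_det[OF n0])
      have Npos: "real n ^ k > 0" using nr by simp
      show "(sorted_on n f \<longrightarrow> 2/3 \<le> accept_prob n k dec adv f) \<and>
            (far_from_sorted n \<epsilon> f \<longrightarrow> accept_prob n k dec adv f \<le> 1/3)"
      proof (intro conjI impI)
        assume sf: "sorted_on n f"
        have "(\<Sum>qs\<in>LL n k. 1 - (if ans qs \<noteq> map f qs then 1 else (0::real))) \<le> (\<Sum>qs\<in>LL n k. if \<not> viol qs (ans qs) then 1 else 0)"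
        proof (intro sum_mono)
          fix qs assume qs: "qs \<in> LL n k"
          show "1 - (if ans qs \<noteq> map f qs then 1 else (0::real)) \<le> (if \<not> viol qs (ans qs) then 1 else 0)"
            using sorted_no_viol[OF sf, of qs] qs by (auto simp: LL_def)
        qed
        hence "real n ^ k - Bad \<le> (\<Sum>qs\<in>LL n k. if \<not> viol qs (ans qs) then 1 else 0)"
          by (simp add: sum_subtractf Bad_def card_LL)
        hence "(real n ^ k - Bad) / real n ^ k \<le> accept_prob n k dec adv f"
          unfolding AP using Npos by (intro divide_right_mono) auto
        moreover have "(real n ^ k - Bad) / real n ^ k = 1 - Bad / real n ^ k"
          using Npos by (simp add: field_simps)
        ultimately show "2/3 \<le> accept_prob n k dec adv f" using BadN by linarith
      next
        assume far: "far_from_sorted n \<epsilon> f"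
        have C: "(\<Sum>qs\<in>LL n (2*m). if viol qs (map f qs) then 0 else 1) / real n ^ (2*m) \<le> 1/6"
          by (rule core[OF n0 far e0 cr m0 mge])
        have "(\<Sum>qs\<in>LL n k. if \<not> viol qs (ans qs) then 1 else (0::real)) \<le>
              (\<Sum>qs\<in>LL n k. (if ans qs \<noteq> map f qs then 1 else 0) + (if viol qs (map f qs) then 0 else 1))"
          by (intro sum_mono) auto
        also have "\<dots> = Bad + (\<Sum>qs\<in>LL n k. if viol qs (map f qs) then 0 else 1)"
          by (simp add: sum.distrib Bad_def)
        finally have "accept_prob n k dec adv f \<le> (Bad + (\<Sum>qs\<in>LL n k. if viol qs (map f qs) then 0 else 1)) / real n ^ k"
          unfolding AP using Npos by (intro divide_right_mono) auto
        also have "\<dots> = Bad / real n ^ k + (\<Sum>qs\<in>LL n k. if viol qs (map f qs) then 0 else 1) / real n ^ k"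
          by (simp add: add_divide_distrib)
        finally show "accept_prob n k dec adv f \<le> 1/3" using BadN C unfolding k_def by linarith
      qed
    qed
  qed
qed
  show ?thesis
    apply (rule exI[of _ "6 * 258^2"], rule exI[of _ 258])
    apply (intro conjI)
      apply simp
     apply simp
    by (rule main)
qed

end
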